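(* Every $f\in\operatorname{NDPF}^{(1)}_N$ is entirely determined by its set of fibers, its set of images, and the single value $f(i)$ for one $i\in\mathbb{Z}$.
   Context: $\operatorname{NDPF}^{(1)}_N$ is the set of functions $f:\mathbb{Z}\to\mathbb{Z}$ that are regressive ($f(i)\le i$), order preserving ($i\le j\Rightarrow f(i)\le f(j)$) and skew periodic ($f(i+N)=f(i)+N$), excluding the shift functions $i\mapsto i-t$ with $t\ne0$. The fibers of $f$ are the nonempty sets $f^{-1}(a)$, $a\in\mathbb{Z}$. *)

theory Defs
  imports Main
begin

definition NDPF1 :: "int \<Rightarrow> (int \<Rightarrow> int) set" where
  "NDPF1 N = {f. (\<forall>i. f i \<le> i) \<and> (\<forall>i j. i \<le> j \<longrightarrow> f i \<le> f j)
              \<and> (\<forall>i. f (i + N) = f i + N)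
              \<and> \<not> (\<exists>t. t \<noteq> 0 \<and> f = (\<lambda>i. i - t))}"

definition fibers :: "(int \<Rightarrow> int) \<Rightarrow> int set set" where
  "fibers f = {f -` {a} | a. f -` {a} \<noteq> {}}"

end

theory Submission
  imports Defs
begin

lemma fib_eq:
  assumes "fibers f = fibers g"
  shows "f -` {f j} = g -` {g j}"
proof -
  have "f -` {f j} \<in> fibers f" unfolding fibers_def by auto
  then have "f -` {f j} \<in> fibers g" using assms by simp
  then obtain b where b: "f -` {f j} = g -` {b}" unfolding fibers_def by auto
  have "j \<in> f -` {f j}" by simp
  then have "g j = b" using b by auto
  then show ?thesis using b by simp
qed

lemma step_aux:
  fixes f g :: "int \<Rightarrow> int"
  assumes mf: "\<forall>a b. a \<le> b \<longrightarrow> f a \<le> f b"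
    and mg: "\<forall>a b. a \<le> b \<longrightarrow> g a \<le> g b"
    and fib: "fibers f = fibers g" and rg: "range f = range g"
    and eq: "f j = g j" and k: "k = j + 1 \<or> k = j - 1"
  shows "f k = g k"
proof -
  have F: "f -` {f j} = g -` {g j}" using fib_eq[OF fib] .
  have same: "f k = f j \<longleftrightarrow> g k = g j"
  proof -
    have "f k = f j \<longleftrightarrow> k \<in> f -` {f j}" by simp
    also have "\<dots> \<longleftrightarrow> k \<in> g -` {g j}" using F by simp
    finally show ?thesis by simp
  qed
  show ?thesis
  proof (rule ccontr)
    assume ne: "f k \<noteq> g k"
    then have ne2: "f k \<noteq> f j" "g k \<noteq> g j" using same eq by auto
    show False
    proof (cases "f k < g k")
      case True
      have "f k \<in> range g" using rg by auto
      then obtain m where m: "f k = g m" by auto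
      show False using k
      proof
        assume kk: "k = j + 1"
        have "f j \<le> f k" using mf[rule_format, of j k] kk by simp
        then have "g j < g m" using ne2 eq m by simp
        then have "j < m" using mg[rule_format, of m j] by force
        then have "g k \<le> g m" using mg[rule_format, of k m] kk by simp
        then show False using True m by simp
      next
        assume kk: "k = j - 1"
        have "g k \<in> range f" using rg by auto
        then obtain m' where m': "g k = f m'" by auto
        have "g k \<le> g j" using mg[rule_format, of k j] kk by simp
        then have "f m' < f j" using ne2 eq m' by simp
        then have "m' < j" using mf[rule_format, of j m'] by force
        then have "f m' \<le> f k" using mf[rule_format, of m' k] kk by simp
        then show False using True m' by simp
      qed
    next
      case False
      then have lt: "g k < f k" using ne by simp
      have "g k \<in> range f" using rg by auto
      then obtain m where m: "g k = f m" by auto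
      show False using k
      proof
        assume kk: "k = j + 1"
        have "g j \<le> g k" using mg[rule_format, of j k] kk by simp
        then have "f j < f m" using ne2 eq m by simp
        then have "j < m" using mf[rule_format, of m j] by force
        then have "f k \<le> f m" using mf[rule_format, of k m] kk by simp
        then show False using lt m by simp
      next
        assume kk: "k = j - 1"
        have "f k \<in> range g" using rg by auto
        then obtain m' where m': "f k = g m'" by auto
        have "f k \<le> f j" using mf[rule_format, of k j] kk by simp
        then have "g m' < g j" using ne2 eq m' by simp
        then have "m' < j" using mg[rule_format, of j m'] by force
        then have "g m' \<le> g k" using mg[rule_format, of m' k] kk by simp
        then show False using lt m' by simp
      qed
    qed
  qed
qed

theorem mainTheorem8:
  fixes N :: int and f g :: "int \<Rightarrow> int" and i :: int
  assumes "N \<ge> 1"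
    and "f \<in> NDPF1 N" and "g \<in> NDPF1 N"
    and "fibers f = fibers g"
    and "range f = range g"
    and "f i = g i"
  shows "f = g"
proof
  fix x
  have mf: "\<forall>a b. a \<le> b \<longrightarrow> f a \<le> f b" using assms(2) unfolding NDPF1_def by blast
  have mg: "\<forall>a b. a \<le> b \<longrightarrow> g a \<le> g b" using assms(3) unfolding NDPF1_def by blast
  show "f x = g x"
  proof (induct x rule: int_induct[where k = i])
    case base then show ?case using assms(6) .
  next
    case (step1 j) then show ?case using step_aux[OF mf mg assms(4) assms(5), of j "j+1"] by simp
  next
    case (step2 j) then show ?case using step_aux[OF mf mg assms(4) assms(5), of j "j-1"] by simp
  qed
qed

end
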